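(* Let $\alpha>0$, $\epsilon\in(0,1/2)$, consider Poisson percolation on $\mathbb{Z}^2$, let $n=n(p_c+\epsilon,t)$ and let $C_1>0$ be a constant. Then, as $t\to\infty$, the probability that there exists an edge inside the square $[-C_1\log n, C_1\log n]^2$ that is closed at time $t$ tends to $0$.
   Context: Poisson percolation: each nearest-neighbour edge of $\mathbb{Z}^2$ with midpoint $x$ is assigned an independent Poisson process of rate $\|x\|^{-\alpha}$, where $\|x\|=\max\{|x_1|,|x_2|\}$; the edge becomes open at the time of its first arrival (closed before it), so at time $t$ the edge with midpoint $x$ is open with probability $1-\exp(-t\|x\|^{-\alpha})$, independently over edges. $p_c=1/2$ and $n(p,t)=c_{p,\alpha}t^{1/\alpha}$ with $c_{p,\alpha}=(-\log(1-p))^{-1/\alpha}$. *)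

theory Defs
  imports "HOL-Probability.Probability"
begin

text \<open>Nearest-neighbour edges of Z^2: (z, True) is the horizontal edge from z to z + (1,0),
  (z, False) is the vertical edge from z to z + (0,1). Every edge has exactly one such name.\<close>
type_synonym edge = "(int \<times> int) \<times> bool"

definition edge_endpoints :: "edge \<Rightarrow> (int \<times> int) set" where
  "edge_endpoints e = (case e of ((a, b), h) \<Rightarrow>
      {(a, b), (if h then (a + 1, b) else (a, b + 1))})"

definition edge_midpoint :: "edge \<Rightarrow> real \<times> real" where
  "edge_midpoint e = (case e of ((a, b), h) \<Rightarrow>
      (if h then (real_of_int a + 1/2, real_of_int b) else (real_of_int a, real_of_int b + 1/2)))"

definition supnorm :: "real \<times> real \<Rightarrow> real" where
  "supnorm x = max \<bar>fst x\<bar> \<bar>snd x\<bar>"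

definition edge_rate :: "real \<Rightarrow> edge \<Rightarrow> real" where
  "edge_rate \<alpha> e = supnorm (edge_midpoint e) powr (- \<alpha>)"

definition edge_in_square :: "real \<Rightarrow> edge \<Rightarrow> bool" where
  "edge_in_square r e = (\<forall>z \<in> edge_endpoints e.
      \<bar>real_of_int (fst z)\<bar> \<le> r \<and> \<bar>real_of_int (snd z)\<bar> \<le> r)"

definition p_c :: real where "p_c = 1/2"

definition c_const :: "real \<Rightarrow> real \<Rightarrow> real" where
  "c_const p \<alpha> = (- ln (1 - p)) powr (- 1 / \<alpha>)"

definition n_fun :: "real \<Rightarrow> real \<Rightarrow> real \<Rightarrow> real" where
  "n_fun \<alpha> p t = c_const p \<alpha> * t powr (1 / \<alpha>)"

end

theory Submission
  imports Defs "HOL-Real_Asymp.Real_Asymp"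
begin

lemma sq_sub:
  assumes "edge_in_square r e"
  shows "e \<in> ({-\<lfloor>r\<rfloor>..\<lfloor>r\<rfloor>} \<times> {-\<lfloor>r\<rfloor>..\<lfloor>r\<rfloor>}) \<times> UNIV"
proof -
  obtain a b h where e: "e = ((a,b),h)" by (metis prod.exhaust)
  have "(a,b) \<in> edge_endpoints e" using e by (simp add: edge_endpoints_def)
  hence "\<bar>real_of_int a\<bar> \<le> r" "\<bar>real_of_int b\<bar> \<le> r" using assms by (auto simp: edge_in_square_def)
  hence "\<bar>a\<bar> \<le> \<lfloor>r\<rfloor>" "\<bar>b\<bar> \<le> \<lfloor>r\<rfloor>" by (simp_all add: le_floor_iff)
  thus ?thesis using e by auto
qed

lemma half_pos: "1/2 \<le> \<bar>real_of_int a + 1/2\<bar>"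
proof (cases "a \<ge> 0")
  case True then show ?thesis by simp
next
  case False then have "real_of_int a \<le> -1" by simp
  then show ?thesis by simp
qed

lemma mid:
  assumes "edge_in_square r e"
  shows "0 < supnorm (edge_midpoint e) \<and> supnorm (edge_midpoint e) \<le> r"
proof -
  obtain a b h where e: "e = ((a,b),h)" by (metis prod.exhaust)
  have p1: "(a,b) \<in> edge_endpoints e" using e by (simp add: edge_endpoints_def)
  have p2: "(if h then (a + 1, b) else (a, b + 1)) \<in> edge_endpoints e" using e by (simp add: edge_endpoints_def)
  have A: "\<bar>real_of_int a\<bar> \<le> r" "\<bar>real_of_int b\<bar> \<le> r" using p1 assms by (auto simp: edge_in_square_def)
  show ?thesis
  proof (cases h)
    case True
    with p2 assms have "\<bar>real_of_int a + 1\<bar> \<le> r" by (auto simp: edge_in_square_def)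
    have m: "edge_midpoint e = (real_of_int a + 1/2, real_of_int b)" using e True by (simp add: edge_midpoint_def)
    have "\<bar>real_of_int a + 1/2\<bar> \<le> r" using A \<open>\<bar>real_of_int a + 1\<bar> \<le> r\<close> by linarith
    moreover have "0 < \<bar>real_of_int a + 1/2\<bar>" using half_pos[of a] by linarith
    ultimately show ?thesis using A unfolding m supnorm_def by (simp add: less_max_iff_disj)
  next
    case False
    with p2 assms have "\<bar>real_of_int b + 1\<bar> \<le> r" by (auto simp: edge_in_square_def)
    have m: "edge_midpoint e = (real_of_int a, real_of_int b + 1/2)" using e False by (simp add: edge_midpoint_def)
    have "\<bar>real_of_int b + 1/2\<bar> \<le> r" using A \<open>\<bar>real_of_int b + 1\<bar> \<le> r\<close> by linarith
    moreover have "0 < \<bar>real_of_int b + 1/2\<bar>" using half_pos[of b] by linarith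
    ultimately show ?thesis using A unfolding m supnorm_def by (simp add: less_max_iff_disj)
  qed
qed

lemma card_bound:
  assumes "r \<ge> 0"
  shows "finite {e. edge_in_square r e} \<and> real (card {e. edge_in_square r e}) \<le> 2*(2*r+1)^2"
proof -
  define S where "S = ({-\<lfloor>r\<rfloor>..\<lfloor>r\<rfloor>} \<times> {-\<lfloor>r\<rfloor>..\<lfloor>r\<rfloor>}) \<times> (UNIV :: bool set)"
  have sub: "{e. edge_in_square r e} \<subseteq> S" using sq_sub S_def by blast
  have fin: "finite S" unfolding S_def by simp
  have N: "0 \<le> \<lfloor>r\<rfloor>" using assms by simp
  have cS: "card S = nat (2*\<lfloor>r\<rfloor>+1) * nat (2*\<lfloor>r\<rfloor>+1) * 2"
    unfolding S_def by (simp add: card_cartesian_product)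
  have "real (card S) = (2*real_of_int \<lfloor>r\<rfloor>+1)^2 * 2"
    using N by (simp add: cS power2_eq_square of_nat_nat)
  also have "\<dots> \<le> 2*(2*r+1)^2"
    using N assms by (simp add: power_mono)
  finally have "real (card S) \<le> 2*(2*r+1)^2" .
  moreover have "card {e. edge_in_square r e} \<le> card S" using card_mono[OF fin sub] .
  ultimately show ?thesis using finite_subset[OF sub fin]
    by (meson of_nat_le_iff order_trans)
qed

theorem lemma2:
  fixes \<alpha> \<epsilon> C\<^sub>1 :: real
    and M :: "'a measure"
    and T :: "edge \<Rightarrow> 'a \<Rightarrow> real"
  assumes "\<alpha> > 0" and "0 < \<epsilon>" and "\<epsilon> < 1/2" and "C\<^sub>1 > 0"
    and "prob_space M"
    and "prob_space.indep_vars M (\<lambda>_. borel) T UNIV"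
    and "\<And>e. distributed M lborel (T e) (exponential_density (edge_rate \<alpha> e))"
  shows "((\<lambda>t. measure M {\<omega> \<in> space M. \<exists>e. edge_in_square (C\<^sub>1 * ln (n_fun \<alpha> (p_c + \<epsilon>) t)) e
                                              \<and> t < T e \<omega>}) \<longlongrightarrow> 0) at_top"
proof -
  interpret P: prob_space M by fact
  define c where "c = c_const (p_c + \<epsilon>) \<alpha>"
  have c: "c > 0" unfolding c_def c_const_def p_c_def
    using assms(2,3) by simp
  define r where "r t = C\<^sub>1 * ln (c * t powr (1/\<alpha>))" for t
  have rn: "C\<^sub>1 * ln (n_fun \<alpha> (p_c + \<epsilon>) t) = r t" for t
    by (simp add: r_def n_fun_def c_def)
  define g where "g t = 2*(2*r t+1)^2 * exp (-t * r t powr (-\<alpha>))" for t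
  have g: "(g \<longlongrightarrow> 0) at_top"
    unfolding g_def r_def using assms(1,4) c by real_asymp
  have rlim: "filterlim r at_top at_top"
    unfolding r_def using assms(1,4) c by real_asymp
  have ev1: "eventually (\<lambda>t. 1 \<le> r t) at_top"
    using rlim by (simp add: filterlim_at_top)
  have ev: "eventually (\<lambda>t. 1 \<le> r t \<and> 0 \<le> t) at_top"
    using eventually_conj[OF ev1 eventually_ge_at_top[of 0]] .
  show ?thesis
  proof (rule tendsto_sandwich[OF _ _ tendsto_const g])
    show "eventually (\<lambda>t. 0 \<le> measure M {\<omega> \<in> space M. \<exists>e. edge_in_square (C\<^sub>1 * ln (n_fun \<alpha> (p_c + \<epsilon>) t)) e
                                              \<and> t < T e \<omega>}) at_top" by simp
    show "eventually (\<lambda>t. measure M {\<omega> \<in> space M. \<exists>e. edge_in_square (C\<^sub>1 * ln (n_fun \<alpha> (p_c + \<epsilon>) t)) e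
                                              \<and> t < T e \<omega>} \<le> g t) at_top"
      using ev
    proof eventually_elim
      case (elim t)
      define E where "E = {e. edge_in_square (r t) e}"
      have cb: "finite E" "real (card E) \<le> 2*(2*r t+1)^2"
        using card_bound[of "r t"] elim E_def by auto
      have meas: "{\<omega> \<in> space M. t < T e \<omega>} \<in> sets M" for e
      proof -
        have "T e \<in> borel_measurable M"
          using distributed_measurable[OF assms(7)[of e]] by simp
        thus ?thesis by measurable
      qed
      have seteq: "{\<omega> \<in> space M. \<exists>e. edge_in_square (C\<^sub>1 * ln (n_fun \<alpha> (p_c + \<epsilon>) t)) e \<and> t < T e \<omega>}
          = (\<Union>e\<in>E. {\<omega> \<in> space M. t < T e \<omega>})"
        unfolding rn E_def by auto
      have each: "measure M {\<omega> \<in> space M. t < T e \<omega>} \<le> exp (-t * r t powr (-\<alpha>))" if "e \<in> E" for e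
      proof -
        have m: "0 < supnorm (edge_midpoint e) \<and> supnorm (edge_midpoint e) \<le> r t"
          using mid that E_def by auto
        have rate: "edge_rate \<alpha> e > 0" unfolding edge_rate_def using m by simp
        have "measure M {\<omega> \<in> space M. t < T e \<omega>} = exp (- t * edge_rate \<alpha> e)"
          using P.exponential_distributedD_gt[OF assms(7)[of e] _ rate] elim by simp
        also have "\<dots> \<le> exp (-t * r t powr (-\<alpha>))"
        proof -
          have "r t powr (-\<alpha>) \<le> edge_rate \<alpha> e"
            unfolding edge_rate_def using m assms(1) by (intro powr_mono2') auto
          thus ?thesis using elim by (simp add: mult_left_mono)
        qed
        finally show ?thesis .
      qed
      have "measure M (\<Union>e\<in>E. {\<omega> \<in> space M. t < T e \<omega>}) \<le> (\<Sum>e\<in>E. measure M {\<omega> \<in> space M. t < T e \<omega>})"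
        by (rule measure_UNION_le[OF cb(1) meas])
      also have "\<dots> \<le> (\<Sum>e\<in>E. exp (-t * r t powr (-\<alpha>)))"
        by (rule sum_mono) (rule each)
      also have "\<dots> = real (card E) * exp (-t * r t powr (-\<alpha>))" by simp
      also have "\<dots> \<le> g t" unfolding g_def using cb(2) by (intro mult_right_mono) auto
      finally show ?case using seteq by simp
    qed
  qed
qed

end
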